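(* Let $[W]\in\mathcal S$ be nonzero. Then the minimal weight of $[W]$ is $\ge 2$. If the minimal weight of $[W]$ is $2$, then up to a permutation of the three coordinates, $[W]$ has the form (1) $(a,a,0)$ with $a\in\Phi\setminus\{0\}$, or (2) $(a+b+c,a+c,b+c)$ with $a,b\in\Phi\setminus\{0\}$, $c\in\Psi$, $a+c$ and $b+c$ non-singular, and $a+b+c$ non-zero singular.
   Context: $EE_8=\sqrt2E_8$, $U=V_{EE_8}^+$; $R(U)$, the group (under fusion) of isomorphism classes of irreducible $U$-modules, $\cong\mathbb Z_2^{10}$, is a quadratic space over $\mathbb Z_2$ with $q([M])=0$ or $1$ according as the $L(0)$-weights of $M$ lie in $\mathbb Z$ or $\frac12+\mathbb Z$. Nonzero singular classes have minimal weight $1$ and non-singular classes have minimal weight $\frac12$. $R(U^{\otimes3})=R(U)^3$, where $(a,b,c)$ is the class of $A\otimes B\otimes C$, with $q(a,b,c)=q(a)+q(b)+q(c)$. $\Phi,\Psi$ are maximal totally singular subspaces of $R(U)$ with $\Phi\cap\Psi=0$; $\mathcal S=\mathrm{span}_{\mathbb Z_2}\{(a,a,0),(0,a,a),(b,b,b)\mid a\in\Phi,b\in\Psi\}$. The minimal weight of a class $[W]$ is the minimal $L(0)$-eigenvalue on the irreducible module $W$. *)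

theory Defs
  imports Complex_Main "HOL-Library.Product_Plus"
begin

text \<open>Abstract model of R(U): a Z_2-vector space 'v (an abelian group with x + x = 0)
  of order 2^10, with a quadratic form q taking values in {0,1} (= Z_2).\<close>

definition polar :: "('v::ab_group_add \<Rightarrow> int) \<Rightarrow> 'v \<Rightarrow> 'v \<Rightarrow> int" where
  "polar q x y = (q (x + y) + q x + q y) mod 2"

text \<open>Z_2-subspace: contains 0 and closed under addition (negation is trivial in char 2).\<close>
definition zsub :: "'a::ab_group_add set \<Rightarrow> bool" where
  "zsub H \<longleftrightarrow> 0 \<in> H \<and> (\<forall>x\<in>H. \<forall>y\<in>H. x + y \<in> H)"

definition zspan :: "'a::ab_group_add set \<Rightarrow> 'a set" where
  "zspan G = \<Inter> {H. zsub H \<and> G \<subseteq> H}"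

definition singular :: "('v \<Rightarrow> int) \<Rightarrow> 'v \<Rightarrow> bool" where
  "singular q x \<longleftrightarrow> q x = 0"

definition totally_singular :: "('v::ab_group_add \<Rightarrow> int) \<Rightarrow> 'v set \<Rightarrow> bool" where
  "totally_singular q H \<longleftrightarrow> zsub H \<and> (\<forall>x\<in>H. singular q x)"

definition max_totally_singular :: "('v::ab_group_add \<Rightarrow> int) \<Rightarrow> 'v set \<Rightarrow> bool" where
  "max_totally_singular q H \<longleftrightarrow> totally_singular q H \<and>
     (\<forall>K. totally_singular q K \<and> H \<subseteq> K \<longrightarrow> K = H)"

text \<open>R(U) for U = V_{EE_8}^+: Z_2^10 with a nonsingular quadratic form of plus type
  (Witt index 5).\<close>
definition RU_space :: "('v::{finite,ab_group_add} \<Rightarrow> int) \<Rightarrow> bool" where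
  "RU_space q \<longleftrightarrow>
     (\<forall>x::'v. x + x = 0) \<and> card (UNIV :: 'v set) = 2^10 \<and>
     (\<forall>x. q x \<in> {0,1}) \<and> q 0 = 0 \<and>
     (\<forall>x y z. polar q (x + y) z = (polar q x z + polar q y z) mod 2) \<and>
     (\<forall>x. (\<forall>y. polar q x y = 0) \<longrightarrow> x = 0) \<and>
     (\<exists>H. totally_singular q H \<and> card H = 2^5)"

text \<open>Minimal weight of an irreducible U-module class: 0 for [U], 1 for nonzero singular,
  1/2 for non-singular classes; for U^{\<otimes>3}, the minimal weight of A\<otimes>B\<otimes>C is the sum.\<close>
definition minwt :: "('v::zero \<Rightarrow> int) \<Rightarrow> 'v \<Rightarrow> real" where
  "minwt q x = (if x = 0 then 0 else if q x = 0 then 1 else 1/2)"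

definition minwt3 :: "('v::zero \<Rightarrow> int) \<Rightarrow> 'v \<times> 'v \<times> 'v \<Rightarrow> real" where
  "minwt3 q w = (case w of (a, b, c) \<Rightarrow> minwt q a + minwt q b + minwt q c)"

definition S_code :: "'v::ab_group_add set \<Rightarrow> 'v set \<Rightarrow> ('v \<times> 'v \<times> 'v) set" where
  "S_code \<Phi> \<Psi> = zspan ({(a, a, 0) | a. a \<in> \<Phi>} \<union> {(0, a, a) | a. a \<in> \<Phi>} \<union> {(b, b, b) | b. b \<in> \<Psi>})"

definition perms3 :: "'v \<times> 'v \<times> 'v \<Rightarrow> ('v \<times> 'v \<times> 'v) set" where
  "perms3 w = (case w of (x, y, z) \<Rightarrow>
     {(x, y, z), (x, z, y), (y, x, z), (y, z, x), (z, x, y), (z, y, x)})"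

end

theory Submission
  imports Defs
begin

lemma S_form:
  fixes \<Phi> \<Psi> :: "'a::ab_group_add set"
  assumes P: "zsub \<Phi>" and Q: "zsub \<Psi>" and W: "W \<in> S_code \<Phi> \<Psi>"
  shows "\<exists>x\<in>\<Phi>. \<exists>y\<in>\<Phi>. \<exists>c\<in>\<Psi>. W = (x + c, x + y + c, y + c)"
proof -
  define T where "T = {(x + c, x + y + c, y + c) | x y c. x \<in> \<Phi> \<and> y \<in> \<Phi> \<and> c \<in> \<Psi>}"
  have z: "zsub T"
    unfolding zsub_def
  proof (intro conjI ballI)
    show "0 \<in> T" unfolding T_def using P Q
      by (auto simp: zsub_def zero_prod_def intro!: exI[of _ 0])
  next
    fix u v assume "u \<in> T" "v \<in> T"
    then obtain x y c x' y' c' where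
      u: "u = (x + c, x + y + c, y + c)" "x \<in> \<Phi>" "y \<in> \<Phi>" "c \<in> \<Psi>" and
      v: "v = (x' + c', x' + y' + c', y' + c')" "x' \<in> \<Phi>" "y' \<in> \<Phi>" "c' \<in> \<Psi>"
      unfolding T_def by blast
    have "u + v = ((x+x') + (c+c'), (x+x') + (y+y') + (c+c'), (y+y') + (c+c'))"
      using u v by (simp add: ac_simps)
    moreover have "x+x' \<in> \<Phi>" "y+y' \<in> \<Phi>" "c+c' \<in> \<Psi>" using u v P Q by (auto simp: zsub_def)
    ultimately show "u + v \<in> T" unfolding T_def by blast
  qed
  have g: "{(a, a, 0) | a. a \<in> \<Phi>} \<union> {(0, a, a) | a. a \<in> \<Phi>} \<union> {(b, b, b) | b. b \<in> \<Psi>} \<subseteq> T"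
  proof -
    have z0: "0 \<in> \<Phi>" "0 \<in> \<Psi>" using P Q by (auto simp: zsub_def)
    have "(a, a, 0) \<in> T" if "a \<in> \<Phi>" for a
    proof -
      have "(a, a, 0) = (a + 0, a + 0 + 0, 0 + (0::'a))" by simp
      then show ?thesis unfolding T_def using that z0 by blast
    qed
    moreover have "(0, a, a) \<in> T" if "a \<in> \<Phi>" for a
    proof -
      have "(0, a, a) = ((0::'a) + 0, 0 + a + 0, a + (0::'a))" by simp
      then show ?thesis unfolding T_def using that z0 by blast
    qed
    moreover have "(b, b, b) \<in> T" if "b \<in> \<Psi>" for b
    proof -
      have "(b, b, b) = (0 + b, (0::'a) + 0 + b, 0 + b)" by simp
      then show ?thesis unfolding T_def using that z0 by blast
    qed
    ultimately show ?thesis by blast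
  qed
  have "W \<in> T" using W z g unfolding S_code_def zspan_def by blast
  then show ?thesis unfolding T_def by blast
qed

theorem lemma2p19:
  fixes q :: "'v::{finite,ab_group_add} \<Rightarrow> int"
    and \<Phi> \<Psi> :: "'v set"
    and W :: "'v \<times> 'v \<times> 'v"
  assumes RU: "RU_space q"
    and Phi: "max_totally_singular q \<Phi>"
    and Psi: "max_totally_singular q \<Psi>"
    and disj: "\<Phi> \<inter> \<Psi> = {0}"
    and W_in: "W \<in> S_code \<Phi> \<Psi>"
    and W_nz: "W \<noteq> 0"
  shows "minwt3 q W \<ge> 2 \<and>
    (minwt3 q W = 2 \<longrightarrow>
      (\<exists>W' \<in> perms3 W.
         (\<exists>a \<in> \<Phi>. a \<noteq> 0 \<and> W' = (a, a, 0)) \<or>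
         (\<exists>a \<in> \<Phi>. \<exists>b \<in> \<Phi>. \<exists>c \<in> \<Psi>. a \<noteq> 0 \<and> b \<noteq> 0 \<and>
            \<not> singular q (a + c) \<and> \<not> singular q (b + c) \<and>
            a + b + c \<noteq> 0 \<and> singular q (a + b + c) \<and>
            W' = (a + b + c, a + c, b + c))))"
proof -
  have ch: "\<And>x::'v. x + x = 0" and q01: "\<And>x. q x \<in> {0,1}"
    and lin: "\<And>x y z. polar q (x + y) z = (polar q x z + polar q y z) mod 2"
    using RU unfolding RU_space_def by auto
  have P: "zsub \<Phi>" "\<And>x. x \<in> \<Phi> \<Longrightarrow> q x = 0"
    using Phi unfolding max_totally_singular_def totally_singular_def singular_def by auto
  have Q: "zsub \<Psi>" "\<And>x. x \<in> \<Psi> \<Longrightarrow> q x = 0"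
    using Psi unfolding max_totally_singular_def totally_singular_def singular_def by auto
  obtain x y c where xyc: "x \<in> \<Phi>" "y \<in> \<Phi>" "c \<in> \<Psi>" and W: "W = (x + c, x + y + c, y + c)"
    using S_form[OF P(1) Q(1) W_in] by blast
  have xyP: "x + y \<in> \<Phi>" using P(1) xyc unfolding zsub_def by auto
  have cancel: "\<And>a b::'v. a + b + b = a" by (metis add.assoc ch add_0_right)
  show ?thesis
  proof (cases "c = 0")
    case True
    have qx: "q x = 0" "q y = 0" "q (x+y) = 0" using P(2) xyc xyP by auto
    have W': "W = (x, x + y, y)" using W True by simp
    have mw: "minwt3 q W = minwt q x + minwt q (x+y) + minwt q y"
      using W' unfolding minwt3_def by simp
    show ?thesis
    proof (cases "x = 0")
      case True
      then have "y \<noteq> 0" using W_nz W' by (auto simp: zero_prod_def)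
      then have "minwt3 q W = 2" using mw True qx by (simp add: minwt_def)
      moreover have "(y, y, 0) \<in> perms3 W" using W' True unfolding perms3_def by simp
      ultimately show ?thesis using \<open>y \<noteq> 0\<close> xyc
        by (intro conjI impI, simp, intro bexI[where x="(y, y, 0)"] disjI1) auto
    next
      case xnz: False
      show ?thesis
      proof (cases "y = 0")
        case True
        then have "minwt3 q W = 2" using mw xnz qx by (simp add: minwt_def)
        moreover have "(x, x, 0) \<in> perms3 W" using W' True unfolding perms3_def by simp
        ultimately show ?thesis using xnz xyc
        by (intro conjI impI, simp, intro bexI[where x="(x, x, 0)"] disjI1) auto
      next
        case ynz: False
        show ?thesis
        proof (cases "x + y = 0")
          case True
          then have "y = x" by (metis add.commute add_left_cancel ch)
          then have "minwt3 q W = 2" using mw xnz qx True by (simp add: minwt_def)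
          moreover have "(x, x, 0) \<in> perms3 W" using W' True \<open>y = x\<close> unfolding perms3_def by simp
          ultimately show ?thesis using xnz xyc
        by (intro conjI impI, simp, intro bexI[where x="(x, x, 0)"] disjI1) auto
        next
          case False
          then have "minwt3 q W = 3" using mw xnz ynz qx by (simp add: minwt_def)
          then show ?thesis by simp
        qed
      qed
    qed
  next
    case cnz: False
    have nz: "a + c \<noteq> 0" if "a \<in> \<Phi>" for a
    proof
      assume "a + c = 0"
      then have "c = a" by (metis add.commute add_left_cancel ch)
      then show False using that xyc disj cnz by blast
    qed
    have qc: "q c = 0" using Q(2) xyc by auto
    have par: "q (a + c) mod 2 = polar q a c" if "a \<in> \<Phi>" for a
      using P(2)[OF that] qc unfolding polar_def by simp
    have "polar q (x + y) c = (polar q x c + polar q y c) mod 2" by (rule lin)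
    then have parity: "(q (x+y+c) + q (x+c) + q (y+c)) mod 2 = 0"
      using par[OF xyP] par[OF xyc(1)] par[OF xyc(2)] by presburger
    have w: "\<And>a. a \<in> \<Phi> \<Longrightarrow> minwt q (a + c) = (if q (a+c) = 0 then 1 else 1/2)"
      using nz unfolding minwt_def by auto
    have mw: "minwt3 q W = minwt q (x+c) + minwt q (x+y+c) + minwt q (y+c)"
      using W unfolding minwt3_def by simp
    have q1: "q (x+c) \<in> {0,1}" "q (y+c) \<in> {0,1}" "q (x+y+c) \<in> {0,1}" using q01 by auto
    have cases3: "(q (x+c) = 0 \<and> q (y+c) = 0 \<and> q (x+y+c) = 0) \<or>
       (q (x+c) = 1 \<and> q (y+c) = 1 \<and> q (x+y+c) = 0) \<or>
       (q (x+c) = 1 \<and> q (y+c) = 0 \<and> q (x+y+c) = 1) \<or>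
       (q (x+c) = 0 \<and> q (y+c) = 1 \<and> q (x+y+c) = 1)"
      using q1 parity by auto
    have wx: "minwt q (x+c) = (if q (x+c) = 0 then 1 else 1/2)" using w xyc by auto
    have wy: "minwt q (y+c) = (if q (y+c) = 0 then 1 else 1/2)" using w xyc by auto
    have wxy: "minwt q (x+y+c) = (if q (x+y+c) = 0 then 1 else 1/2)" using w xyP by auto
    have xpos: "x \<noteq> 0" if "q (x+c) = 1" using that qc by auto
    have ypos: "y \<noteq> 0" if "q (y+c) = 1" using that qc by auto
    have xypos: "x + y \<noteq> 0" if "q (x+y+c) = 1" using that qc by auto
    from cases3 show ?thesis
    proof (elim disjE)
      assume h: "q (x+c) = 0 \<and> q (y+c) = 0 \<and> q (x+y+c) = 0"
      then have "minwt3 q W = 3" using mw wx wy wxy by simp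
      then show ?thesis by simp
    next
      assume h: "q (x+c) = 1 \<and> q (y+c) = 1 \<and> q (x+y+c) = 0"
      then have m2: "minwt3 q W = 2" using mw wx wy wxy by simp
      have pm: "(x+y+c, x+c, y+c) \<in> perms3 W" using W unfolding perms3_def by simp
      have ee: "x + 0 = x" by simp
      have nzz: "x + y + c \<noteq> 0" using nz[OF xyP] by (simp add: add.assoc)
      have ex: "\<exists>a\<in>\<Phi>. \<exists>b\<in>\<Phi>. \<exists>c'\<in>\<Psi>. a \<noteq> 0 \<and> b \<noteq> 0 \<and>
            \<not> singular q (a + c') \<and> \<not> singular q (b + c') \<and>
            a + b + c' \<noteq> 0 \<and> singular q (a + b + c') \<and>
            (x+y+c, x+c, y+c) = (a + b + c', a + c', b + c')"
        apply (rule bexI[where x="x"], rule bexI[where x="y"], rule bexI[where x=c])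
        using h xpos ypos xypos xyc xyP nzz by (auto simp: singular_def ee)
      show ?thesis using m2 apply (intro conjI impI, simp)
        apply (rule bexI[OF _ pm]) using ex by (rule disjI2)
    next
      assume h: "q (x+c) = 1 \<and> q (y+c) = 0 \<and> q (x+y+c) = 1"
      then have m2: "minwt3 q W = 2" using mw wx wy wxy by simp
      have pm: "(y+c, x+y+c, x+c) \<in> perms3 W" using W unfolding perms3_def by simp
      have ee: "x + y + x + c = y + c" by (metis add.commute cancel)
      have nzz: "y + c \<noteq> 0" using nz xyc by auto
      have ex: "\<exists>a\<in>\<Phi>. \<exists>b\<in>\<Phi>. \<exists>c'\<in>\<Psi>. a \<noteq> 0 \<and> b \<noteq> 0 \<and>
            \<not> singular q (a + c') \<and> \<not> singular q (b + c') \<and>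
            a + b + c' \<noteq> 0 \<and> singular q (a + b + c') \<and>
            (y+c, x+y+c, x+c) = (a + b + c', a + c', b + c')"
        apply (rule bexI[where x="x+y"], rule bexI[where x="x"], rule bexI[where x=c])
        using h xpos ypos xypos xyc xyP nzz by (auto simp: singular_def ee)
      show ?thesis using m2 apply (intro conjI impI, simp)
        apply (rule bexI[OF _ pm]) using ex by (rule disjI2)
    next
      assume h: "q (x+c) = 0 \<and> q (y+c) = 1 \<and> q (x+y+c) = 1"
      then have m2: "minwt3 q W = 2" using mw wx wy wxy by simp
      have pm: "(x+c, x+y+c, y+c) \<in> perms3 W" using W unfolding perms3_def by simp
      have ee: "x + y + y + c = x + c" by (simp add: cancel)
      have nzz: "x + c \<noteq> 0" using nz xyc by auto
      have ex: "\<exists>a\<in>\<Phi>. \<exists>b\<in>\<Phi>. \<exists>c'\<in>\<Psi>. a \<noteq> 0 \<and> b \<noteq> 0 \<and>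
            \<not> singular q (a + c') \<and> \<not> singular q (b + c') \<and>
            a + b + c' \<noteq> 0 \<and> singular q (a + b + c') \<and>
            (x+c, x+y+c, y+c) = (a + b + c', a + c', b + c')"
        apply (rule bexI[where x="x+y"], rule bexI[where x="y"], rule bexI[where x=c])
        using h xpos ypos xypos xyc xyP nzz by (auto simp: singular_def ee)
      show ?thesis using m2 apply (intro conjI impI, simp)
        apply (rule bexI[OF _ pm]) using ex by (rule disjI2)
    qed
  qed
qed

end
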